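(* In the setting of the context, with probability at least $1-\delta/4$, for all $t\ge1$ and all $\mathbf x\in\mathcal D$, $$\big|\overline\zeta_t(\mathbf x)-\widetilde\zeta_t(\mathbf x)\big|\le\nu_t\,\alpha,\qquad \alpha\triangleq\sum_{i=1}^M\omega_i\frac{N_i}{\sigma^2}\Big(2\sqrt{2\sigma^2\log\tfrac{8N_i}{\delta}}+d_i\Big).$$
   Context: Setting. $\mathcal D\subset\mathbb R^D$ is a finite set; $k$ is a squared-exponential kernel with $k(\mathbf x,\mathbf x')\le1$. Target $f$ and meta-functions $f_1,\dots,f_M$ lie in the RKHS of $k$ with norms at most $B$. Target observations $y_t=f(\mathbf x_t)+\epsilon_t$, $\epsilon_t$ i.i.d. $\mathcal N(0,\sigma^2)$. Meta-task $i$ has fixed meta-observations $(\mathbf x_{i,j},y_{i,j})$, $j=1,\dots,N_i$, with $y_{i,j}=f_i(\mathbf x_{i,j})+\epsilon_{i,j}$, $\epsilon_{i,j}$ i.i.d. $\mathcal N(0,\sigma^2)$. Function gap $d_i\triangleq\max_{j}|f(\mathbf x_{i,j})-f_i(\mathbf x_{i,j})|$. Posteriors: target $\mu_t(\mathbf x)=\mathbf k_t(\mathbf x)^\top(\mathbf K_t+\lambda I)^{-1}\mathbf y_t$, $\sigma_t^2(\mathbf x)=k(\mathbf x,\mathbf x)-\mathbf k_t(\mathbf x)^\top(\mathbf K_t+\lambda I)^{-1}\mathbf k_t(\mathbf x)$ (Gram matrix/vector of the first $t$ queried inputs). Meta-task $i$: $\overline\mu_i(\mathbf x)=\mathbf k_i(\mathbf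 x)^\top(\mathbf K_i+\sigma^2I)^{-1}\overline{\mathbf y}_i$, $\overline\sigma_i^2(\mathbf x)=k(\mathbf x,\mathbf x)-\mathbf k_i(\mathbf x)^\top(\mathbf K_i+\sigma^2I)^{-1}\mathbf k_i(\mathbf x)$, where $\mathbf K_i=[k(\mathbf x_{i,j},\mathbf x_{i,j'})]$, $\mathbf k_i(\mathbf x)=[k(\mathbf x_{i,j},\mathbf x)]_j$, $\overline{\mathbf y}_i=[y_{i,j}]_j$. Parameters: $\tau>0$, $\beta_t>0$, $\nu_t\in[0,1]$ for all $t$, $\omega_i\ge0$ with $\sum_i\omega_i=1$. Acquisition functions. $\overline\zeta_t(\mathbf x)=\nu_t\sum_{i=1}^M\omega_i[\overline\mu_i(\mathbf x)+\tau\overline\sigma_i(\mathbf x)]+(1-\nu_t)[\mu_{t-1}(\mathbf x)+\beta_t\sigma_{t-1}(\mathbf x)]$. Auxiliary: let $\widetilde y_{i,j}=f(\mathbf x_{i,j})+\widetilde\epsilon_{i,j}$ be hypothetical noisy target observations at the meta-inputs, $\widetilde\epsilon_{i,j}$ i.i.d. $\mathcal N(0,\sigma^2)$ independent of everything else; $\widetilde\mu_i$, $\widetilde\sigma_i$ are computed like $\overline\mu_i,\overline\sigma_i$ with $\overline{\mathbf y}_i$ replaced by $\widetilde{\mathbf y}_i=[\widetilde y_{i,j}]_j$ (so $\widetilde\sigma_i=\overline\sigma_i$), and $\widetilde\zeta_t(\mathbf x)=\nu_t\sum_{i=1}^M\omega_i[\widetilde\mu_i(\mathbf x)+\tau\widetilde\sigma_i(\mathbf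 x)]+(1-\nu_t)[\mu_{t-1}(\mathbf x)+\beta_t\sigma_{t-1}(\mathbf x)]$. *)

theory Defs
  imports "HOL-Probability.Probability" "Jordan_Normal_Form.Gauss_Jordan_Elimination"
begin

(* squared-exponential kernel with signal variance s (assumed 0 < s <= 1, so k <= 1)
   and lengthscale l *)
definition se_kernel :: "real \<Rightarrow> real \<Rightarrow> real ^ 'd \<Rightarrow> real ^ 'd \<Rightarrow> real" where
  "se_kernel s l x x' = s * exp (- (norm (x - x'))\<^sup>2 / (2 * l\<^sup>2))"

definition gram_mat :: "('a \<Rightarrow> 'a \<Rightarrow> real) \<Rightarrow> 'a list \<Rightarrow> real mat" where
  "gram_mat k xs = mat (length xs) (length xs) (\<lambda>(i,j). k (xs ! i) (xs ! j))"

definition kvec :: "('a \<Rightarrow> 'a \<Rightarrow> real) \<Rightarrow> 'a list \<Rightarrow> 'a \<Rightarrow> real vec" where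
  "kvec k xs x = vec (length xs) (\<lambda>j. k (xs ! j) x)"

definition reg_inv :: "('a \<Rightarrow> 'a \<Rightarrow> real) \<Rightarrow> real \<Rightarrow> 'a list \<Rightarrow> real mat" where
  "reg_inv k lam xs = the (mat_inverse (gram_mat k xs + lam \<cdot>\<^sub>m 1\<^sub>m (length xs)))"

definition post_mean :: "('a \<Rightarrow> 'a \<Rightarrow> real) \<Rightarrow> real \<Rightarrow> 'a list \<Rightarrow> real list \<Rightarrow> 'a \<Rightarrow> real" where
  "post_mean k lam xs ys x = kvec k xs x \<bullet> (reg_inv k lam xs *\<^sub>v vec_of_list ys)"

definition post_var :: "('a \<Rightarrow> 'a \<Rightarrow> real) \<Rightarrow> real \<Rightarrow> 'a list \<Rightarrow> 'a \<Rightarrow> real" where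
  "post_var k lam xs x = k x x - kvec k xs x \<bullet> (reg_inv k lam xs *\<^sub>v kvec k xs x)"

definition post_sd :: "('a \<Rightarrow> 'a \<Rightarrow> real) \<Rightarrow> real \<Rightarrow> 'a list \<Rightarrow> 'a \<Rightarrow> real" where
  "post_sd k lam xs x = sqrt (post_var k lam xs x)"

definition meta_inputs :: "(nat \<Rightarrow> nat \<Rightarrow> 'a) \<Rightarrow> (nat \<Rightarrow> nat) \<Rightarrow> nat \<Rightarrow> 'a list" where
  "meta_inputs xm N i = map (xm i) [0..<N i]"

(* acquisition function zeta_t with given meta-task observation lists Y i,
   target history (first t-1 queried inputs Xh, observations Yh) *)
definition acq ::
  "('a \<Rightarrow> 'a \<Rightarrow> real) \<Rightarrow> real \<Rightarrow> real \<Rightarrow> real \<Rightarrow> real \<Rightarrow> real \<Rightarrow> nat \<Rightarrow> (nat \<Rightarrow> real)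
   \<Rightarrow> (nat \<Rightarrow> 'a list) \<Rightarrow> (nat \<Rightarrow> real list) \<Rightarrow> 'a list \<Rightarrow> real list \<Rightarrow> 'a \<Rightarrow> real" where
  "acq k sig lam tau beta nu M w Xm Ym Xh Yh x =
     nu * (\<Sum>i<M. w i * (post_mean k (sig\<^sup>2) (Xm i) (Ym i) x
                           + tau * post_sd k (sig\<^sup>2) (Xm i) x))
     + (1 - nu) * (post_mean k lam Xh Yh x + beta * post_sd k lam Xh x)"

end

theory Submission
  imports Defs "Jordan_Normal_Form.Determinant"
begin

lemma exp_abs_le_two: fixes u :: real shows "exp \<bar>u\<bar> \<le> exp u + exp (- u)"
  by (cases "u \<ge> 0") (simp_all add: add_increasing add_increasing2)

lemma exp_abs_diff_le:
  fixes t x y :: real assumes t: "0 \<le> t"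
  shows "exp (t * \<bar>x - y\<bar>) \<le> (exp (2*t*x) + exp (-(2*t)*x) + exp (2*t*y) + exp (-(2*t)*y)) / 2"
proof -
  have "t * \<bar>x - y\<bar> \<le> t * \<bar>x\<bar> + t * \<bar>y\<bar>"
    using t abs_triangle_ineq4[of x y] by (simp add: distrib_left[symmetric] mult_left_mono)
  then have "exp (t * \<bar>x - y\<bar>) \<le> exp (t * \<bar>x\<bar>) * exp (t * \<bar>y\<bar>)"
    by (simp add: exp_add[symmetric])
  also have "\<dots> \<le> ((exp (t * \<bar>x\<bar>))\<^sup>2 + (exp (t * \<bar>y\<bar>))\<^sup>2) / 2"
    using sum_squares_bound[of "exp (t * \<bar>x\<bar>)" "exp (t * \<bar>y\<bar>)"] by simp
  also have "(exp (t * \<bar>x\<bar>))\<^sup>2 = exp \<bar>2*t*x\<bar>"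
    using t by (simp add: exp_double[symmetric] abs_mult)
  also have "(exp (t * \<bar>y\<bar>))\<^sup>2 = exp \<bar>2*t*y\<bar>"
    using t by (simp add: exp_double[symmetric] abs_mult)
  also have "(exp \<bar>2*t*x\<bar> + exp \<bar>2*t*y\<bar>) / 2 \<le> (exp (2*t*x) + exp (-(2*t)*x) + exp (2*t*y) + exp (-(2*t)*y)) / 2"
    using exp_abs_le_two[of "2*t*x"] exp_abs_le_two[of "2*t*y"] by simp
  finally show ?thesis .
qed

lemma normal_density_shift:
  fixes \<sigma> s x :: real assumes "0 < \<sigma>"
  shows "exp (s * x) * normal_density 0 \<sigma> x = exp (\<sigma>\<^sup>2 * s\<^sup>2 / 2) * normal_density (\<sigma>\<^sup>2 * s) \<sigma> x"
proof -
  have "s * x + (- (x - 0)\<^sup>2 / (2 * \<sigma>\<^sup>2)) = \<sigma>\<^sup>2 * s\<^sup>2 / 2 + (- (x - \<sigma>\<^sup>2 * s)\<^sup>2 / (2 * \<sigma>\<^sup>2))"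
    using assms by (simp add: field_simps power2_eq_square)
  then have "exp (s * x) * exp (- (x - 0)\<^sup>2 / (2 * \<sigma>\<^sup>2)) = exp (\<sigma>\<^sup>2 * s\<^sup>2 / 2) * exp (- (x - \<sigma>\<^sup>2 * s)\<^sup>2 / (2 * \<sigma>\<^sup>2))"
    by (metis exp_add)
  then show ?thesis unfolding normal_density_def by (metis (no_types, lifting) mult.left_commute)
qed

lemma nn_integral_normal_density:
  fixes \<sigma> \<mu> :: real assumes "0 < \<sigma>"
  shows "(\<integral>\<^sup>+x. ennreal (normal_density \<mu> \<sigma> x) \<partial>lborel) = 1"
proof -
  interpret prob_space "density lborel (normal_density \<mu> \<sigma>)"
    using prob_space_normal_density[OF assms] .
  have "emeasure (density lborel (normal_density \<mu> \<sigma>)) UNIV = 1"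
    using emeasure_space_1 by simp
  then show ?thesis by (simp add: emeasure_density)
qed

lemma normal_mgf_nn:
  fixes \<sigma> s :: real
  assumes "0 < \<sigma>" "distributed P lborel X (normal_density 0 \<sigma>)"
  shows "(\<integral>\<^sup>+\<omega>. ennreal (exp (s * X \<omega>)) \<partial>P) = ennreal (exp (\<sigma>\<^sup>2 * s\<^sup>2 / 2))"
proof -
  have "(\<integral>\<^sup>+\<omega>. ennreal (exp (s * X \<omega>)) \<partial>P) = (\<integral>\<^sup>+x. ennreal (normal_density 0 \<sigma> x) * ennreal (exp (s*x)) \<partial>lborel)"
    using distributed_nn_integral[OF assms(2), of "\<lambda>x. ennreal (exp (s*x))"] by simp
  also have "\<dots> = (\<integral>\<^sup>+x. ennreal (exp (\<sigma>\<^sup>2 * s\<^sup>2 / 2)) * ennreal (normal_density (\<sigma>\<^sup>2 * s) \<sigma> x) \<partial>lborel)"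
    apply (rule nn_integral_cong)
    using normal_density_shift[OF assms(1)]
    by (metis ennreal_mult' mult.commute normal_density_nonneg)
  also have "\<dots> = ennreal (exp (\<sigma>\<^sup>2 * s\<^sup>2 / 2)) * (\<integral>\<^sup>+x. ennreal (normal_density (\<sigma>\<^sup>2 * s) \<sigma> x) \<partial>lborel)"
    by (rule nn_integral_cmult) simp
  finally show ?thesis using nn_integral_normal_density[OF assms(1)] by simp
qed

lemma four_times: fixes x :: "'a::comm_semiring_1" shows "x + x + x + x = 4 * x"
proof -
  have f: "(4::'a) = 2 + 2" by simp
  have "4 * x = 2 * x + 2 * x" unfolding f by (rule distrib_right)
  then show ?thesis by (metis mult_2 add.assoc)
qed

lemma prob_part:
  fixes P :: "'w measure" and X Y :: "nat \<Rightarrow> nat \<Rightarrow> 'w \<Rightarrow> real" and N :: "nat \<Rightarrow> nat"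
    and w :: "nat \<Rightarrow> real" and sig delta :: real and M :: nat
  assumes ps: "prob_space P" and sg: "0 < sig" and d0: "0 < delta" and d1: "delta < 1"
    and w0: "\<And>i. i < M \<Longrightarrow> 0 \<le> w i" and w1: "(\<Sum>i<M. w i) = 1" and N0: "\<And>i. i < M \<Longrightarrow> 0 < N i"
    and dX: "\<And>i j. i < M \<Longrightarrow> j < N i \<Longrightarrow> distributed P lborel (X i j) (normal_density 0 sig)"
    and dY: "\<And>i j. i < M \<Longrightarrow> j < N i \<Longrightarrow> distributed P lborel (Y i j) (normal_density 0 sig)"
    and T: "T \<in> sets P"
    and inc: "\<And>\<omega>. \<omega> \<in> space P \<Longrightarrow>
       (\<Sum>i<M. w i * real (N i) * Max ((\<lambda>j. \<bar>X i j \<omega> - Y i j \<omega>\<bar>) ` {..<N i}))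
         \<le> (\<Sum>i<M. w i * real (N i) * (2 * sqrt (2 * sig\<^sup>2 * ln (8 * real (N i) / delta)))) \<Longrightarrow> \<omega> \<in> T"
  shows "measure P T \<ge> 1 - delta / 4"
proof -
  interpret prob_space P by (rule ps)
  define L where "L i = ln (8 * real (N i) / delta)" for i
  define a where "a i = sqrt (2 * sig\<^sup>2 * L i)" for i
  define t where "t i = a i / (2 * sig\<^sup>2)" for i
  define c where "c i = w i * real (N i)" for i
  define C where "C = (\<Sum>i<M. c i / t i)"
  define v where "v i = c i / t i / C" for i
  define m where "m i \<omega> = Max ((\<lambda>j. \<bar>X i j \<omega> - Y i j \<omega>\<bar>) ` {..<N i})" for i \<omega>
  define coef where "coef i = v i * exp (- (2 * a i * t i)) / 2" for i
  define F where "F i j \<omega> = coef i * (exp (2*t i*X i j \<omega>) + exp (-(2*t i)*X i j \<omega>)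
      + exp (2*t i*Y i j \<omega>) + exp (-(2*t i)*Y i j \<omega>))" for i j \<omega>
  define W where "W \<omega> = (\<Sum>i<M. \<Sum>j<N i. F i j \<omega>)" for \<omega>
  have L_pos: "0 < L i" if "i < M" for i
  proof -
    have "1 \<le> real (N i)" using N0[OF that] by simp
    then have "1 < 8 * real (N i) / delta" using d0 d1 by (simp add: field_simps)
    then show ?thesis unfolding L_def by simp
  qed
  have a_pos: "0 < a i" if "i < M" for i unfolding a_def using L_pos[OF that] sg by simp
  have t_pos: "0 < t i" if "i < M" for i unfolding t_def using a_pos[OF that] sg by simp
  have c_nn: "0 \<le> c i" if "i < M" for i unfolding c_def using w0[OF that] by simp
  have ct_nn: "0 \<le> c i / t i" if "i \<in> {..<M}" for i
    using that c_nn[of i] t_pos[of i] by (simp add: divide_nonneg_pos)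
  have C_pos: "0 < C"
  proof (rule ccontr)
    assume "\<not> 0 < C"
    moreover have "0 \<le> C" unfolding C_def using ct_nn by (rule sum_nonneg)
    ultimately have "C = 0" by simp
    then have "\<forall>i\<in>{..<M}. c i / t i = 0" unfolding C_def
      using sum_nonneg_eq_0_iff[of "{..<M}" "\<lambda>i. c i / t i"] ct_nn by auto
    then have "\<forall>i\<in>{..<M}. w i = 0" using t_pos N0 unfolding c_def by (metis lessThan_iff less_irrefl divide_eq_0_iff mult_eq_0_iff of_nat_eq_0_iff)
    then have "(\<Sum>i<M. w i) = 0" by simp
    with w1 show False by simp
  qed
  have v_nn: "0 \<le> v i" if "i < M" for i unfolding v_def using c_nn[OF that] t_pos[OF that] C_pos by simp
  have v_sum: "(\<Sum>i<M. v i) = 1"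
  proof -
    have "(\<Sum>i<M. v i) = (\<Sum>i<M. c i / t i) / C" unfolding v_def by (rule sum_divide_distrib[symmetric])
    also have "\<dots> = 1" using C_pos unfolding C_def by simp
    finally show ?thesis .
  qed
  have vt: "v i * t i = c i / C" if "i < M" for i unfolding v_def using t_pos[OF that] by simp
  have key: "2 * sig\<^sup>2 * (t i)\<^sup>2 - 2 * a i * t i = - L i" if "i < M" for i
  proof -
    have a2: "(a i)\<^sup>2 = 2 * sig\<^sup>2 * L i" unfolding a_def using L_pos[OF that] by simp
    have "2 * sig\<^sup>2 * (t i)\<^sup>2 - 2 * a i * t i = - ((a i)\<^sup>2 / (2 * sig\<^sup>2))"
      unfolding t_def using sg by (simp add: field_simps power2_eq_square)
    also have "\<dots> = - L i" using a2 sg by simp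
    finally show ?thesis .
  qed
  have expL: "exp (- L i) = delta / (8 * real (N i))" if "i < M" for i
  proof -
    have "0 < 8 * real (N i) / delta" using N0[OF that] d0 by simp
    then have "exp (L i) = 8 * real (N i) / delta" unfolding L_def by simp
    then show ?thesis by (simp add: exp_minus)
  qed
  have coef_nn: "0 \<le> coef i" if "i < M" for i unfolding coef_def using v_nn[OF that] by simp
  have F_nn: "0 \<le> F i j \<omega>" if "i < M" for i j \<omega> unfolding F_def using coef_nn[OF that] by simp
  have stepA: "1 \<le> W \<omega>" if om: "\<omega> \<in> space P" "\<omega> \<notin> T" for \<omega>
  proof -
    have gt: "(\<Sum>i<M. c i * (2 * a i)) < (\<Sum>i<M. c i * m i \<omega>)"
    proof -
      have "\<not> ((\<Sum>i<M. w i * real (N i) * Max ((\<lambda>j. \<bar>X i j \<omega> - Y i j \<omega>\<bar>) ` {..<N i}))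
         \<le> (\<Sum>i<M. w i * real (N i) * (2 * sqrt (2 * sig\<^sup>2 * ln (8 * real (N i) / delta)))))"
        using inc[OF om(1)] om(2) by blast
      then show ?thesis unfolding c_def m_def a_def L_def by (simp add: not_le)
    qed
    have "1 < (\<Sum>i<M. v i * (1 + t i * (m i \<omega> - 2 * a i)))"
    proof -
      have "(\<Sum>i<M. v i * (1 + t i * (m i \<omega> - 2 * a i))) = (\<Sum>i<M. v i + (v i * t i) * (m i \<omega> - 2 * a i))"
        by (intro sum.cong refl) (simp add: algebra_simps)
      also have "\<dots> = (\<Sum>i<M. v i) + (\<Sum>i<M. (v i * t i) * (m i \<omega> - 2 * a i))"
        by (rule sum.distrib)
      also have "(\<Sum>i<M. (v i * t i) * (m i \<omega> - 2 * a i)) = (\<Sum>i<M. c i * (m i \<omega> - 2 * a i)) / C"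
        by (simp add: vt sum_divide_distrib)
      also have "(\<Sum>i<M. c i * (m i \<omega> - 2 * a i)) = (\<Sum>i<M. c i * m i \<omega>) - (\<Sum>i<M. c i * (2 * a i))"
        by (simp add: sum_subtractf[symmetric] right_diff_distrib)
      finally show ?thesis using v_sum gt C_pos by simp
    qed
    also have "\<dots> \<le> (\<Sum>i<M. v i * exp (t i * (m i \<omega> - 2 * a i)))"
      using v_nn by (intro sum_mono mult_left_mono) auto
    also have "\<dots> \<le> W \<omega>" unfolding W_def
    proof (rule sum_mono)
      fix i assume "i \<in> {..<M}"
      then have i: "i < M" by simp
      have fin: "finite ((\<lambda>j. \<bar>X i j \<omega> - Y i j \<omega>\<bar>) ` {..<N i})" by simp
      have ne: "(\<lambda>j. \<bar>X i j \<omega> - Y i j \<omega>\<bar>) ` {..<N i} \<noteq> {}" using N0[OF i] by auto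
      obtain j0 where j0: "j0 < N i" "m i \<omega> = \<bar>X i j0 \<omega> - Y i j0 \<omega>\<bar>"
        using Max_in[OF fin ne] unfolding m_def by auto
      have "exp (t i * m i \<omega>) = exp (t i * \<bar>X i j0 \<omega> - Y i j0 \<omega>\<bar>)" using j0 by simp
      also have "\<dots> \<le> (\<Sum>j<N i. exp (t i * \<bar>X i j \<omega> - Y i j \<omega>\<bar>))"
        by (rule member_le_sum[where f="\<lambda>j. exp (t i * \<bar>X i j \<omega> - Y i j \<omega>\<bar>)"]) (use j0 in auto)
      also have "\<dots> \<le> (\<Sum>j<N i. (exp (2*t i*X i j \<omega>) + exp (-(2*t i)*X i j \<omega>)
          + exp (2*t i*Y i j \<omega>) + exp (-(2*t i)*Y i j \<omega>)) / 2)"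
        using t_pos[OF i] by (intro sum_mono exp_abs_diff_le) simp
      finally have e1: "exp (t i * m i \<omega>) \<le> \<dots>" .
      have "v i * exp (t i * (m i \<omega> - 2 * a i)) = v i * exp (- (2 * a i * t i)) * exp (t i * m i \<omega>)"
        by (simp add: exp_add[symmetric] algebra_simps)
      also have "\<dots> \<le> v i * exp (- (2 * a i * t i)) * (\<Sum>j<N i. (exp (2*t i*X i j \<omega>) + exp (-(2*t i)*X i j \<omega>)
          + exp (2*t i*Y i j \<omega>) + exp (-(2*t i)*Y i j \<omega>)) / 2)"
        using e1 v_nn[OF i] by (intro mult_left_mono) simp_all
      also have "\<dots> = (\<Sum>j<N i. F i j \<omega>)"
        unfolding F_def coef_def by (simp add: sum_distrib_left)
      finally show "v i * exp (t i * (m i \<omega> - 2 * a i)) \<le> (\<Sum>j<N i. F i j \<omega>)" .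
    qed
    finally show ?thesis by simp
  qed
  have Xm: "X i j \<in> borel_measurable P" if "i < M" "j < N i" for i j
    using distributed_measurable[OF dX[OF that]] by simp
  have Ym: "Y i j \<in> borel_measurable P" if "i < M" "j < N i" for i j
    using distributed_measurable[OF dY[OF that]] by simp
  have Fm: "(\<lambda>\<omega>. ennreal (F i j \<omega>)) \<in> borel_measurable P" if "i < M" "j < N i" for i j
  proof -
    note Xm[OF that, measurable] Ym[OF that, measurable]
    show ?thesis unfolding F_def by measurable
  qed
  have intF: "(\<integral>\<^sup>+\<omega>. ennreal (F i j \<omega>) \<partial>P) = ennreal (coef i * (4 * exp (2 * sig\<^sup>2 * (t i)\<^sup>2)))"
    if ij: "i < M" "j < N i" for i j
  proof -
    note Xm[OF that, measurable] Ym[OF that, measurable]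
    have mg: "(\<integral>\<^sup>+\<omega>. ennreal (exp (s * Z \<omega>)) \<partial>P) = ennreal (exp (2 * sig\<^sup>2 * (t i)\<^sup>2))"
      if "Z = X i j \<or> Z = Y i j" "s = 2 * t i \<or> s = -(2 * t i)" for Z s
    proof -
      have d: "distributed P lborel Z (normal_density 0 sig)" using that(1) dX[OF ij] dY[OF ij] by auto
      have "sig\<^sup>2 * s\<^sup>2 / 2 = 2 * sig\<^sup>2 * (t i)\<^sup>2" using that(2) by (auto simp: power2_eq_square)
      then show ?thesis using normal_mgf_nn[OF sg d, of s] by simp
    qed
    have "(\<lambda>\<omega>. ennreal (F i j \<omega>)) = (\<lambda>\<omega>. ennreal (coef i) * (ennreal (exp (2*t i*X i j \<omega>)) + ennreal (exp (-(2*t i)*X i j \<omega>))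
      + ennreal (exp (2*t i*Y i j \<omega>)) + ennreal (exp (-(2*t i)*Y i j \<omega>))))"
      unfolding F_def using coef_nn[OF ij(1)] by (simp add: ennreal_mult' ennreal_plus[symmetric] del: ennreal_plus)
    then have "(\<integral>\<^sup>+\<omega>. ennreal (F i j \<omega>) \<partial>P) = ennreal (coef i) * ((\<integral>\<^sup>+\<omega>. ennreal (exp (2*t i*X i j \<omega>)) \<partial>P)
      + (\<integral>\<^sup>+\<omega>. ennreal (exp (-(2*t i)*X i j \<omega>)) \<partial>P)
      + (\<integral>\<^sup>+\<omega>. ennreal (exp (2*t i*Y i j \<omega>)) \<partial>P) + (\<integral>\<^sup>+\<omega>. ennreal (exp (-(2*t i)*Y i j \<omega>)) \<partial>P))"
      by (simp add: nn_integral_cmult nn_integral_add)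
    also have "\<dots> = ennreal (coef i) * (4 * ennreal (exp (2 * sig\<^sup>2 * (t i)\<^sup>2)))"
    proof -
      have m1: "(\<integral>\<^sup>+\<omega>. ennreal (exp (2*t i*X i j \<omega>)) \<partial>P) = ennreal (exp (2 * sig\<^sup>2 * (t i)\<^sup>2))"
        by (rule mg) simp_all
      have m2: "(\<integral>\<^sup>+\<omega>. ennreal (exp (-(2*t i)*X i j \<omega>)) \<partial>P) = ennreal (exp (2 * sig\<^sup>2 * (t i)\<^sup>2))"
        by (rule mg) simp_all
      have m3: "(\<integral>\<^sup>+\<omega>. ennreal (exp (2*t i*Y i j \<omega>)) \<partial>P) = ennreal (exp (2 * sig\<^sup>2 * (t i)\<^sup>2))"
        by (rule mg) simp_all
      have m4: "(\<integral>\<^sup>+\<omega>. ennreal (exp (-(2*t i)*Y i j \<omega>)) \<partial>P) = ennreal (exp (2 * sig\<^sup>2 * (t i)\<^sup>2))"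
        by (rule mg) simp_all
      show ?thesis by (simp only: m1 m2 m3 m4 four_times)
    qed
    also have "\<dots> = ennreal (coef i * (4 * exp (2 * sig\<^sup>2 * (t i)\<^sup>2)))"
      using coef_nn[OF ij(1)] by (simp add: ennreal_mult')
    finally show ?thesis .
  qed
  have termeq: "real (N i) * (coef i * (4 * exp (2 * sig\<^sup>2 * (t i)\<^sup>2))) = v i * (delta / 4)" if i: "i < M" for i
  proof -
    have "real (N i) * (coef i * (4 * exp (2 * sig\<^sup>2 * (t i)\<^sup>2)))
        = 2 * real (N i) * v i * (exp (- (2 * a i * t i)) * exp (2 * sig\<^sup>2 * (t i)\<^sup>2))"
      unfolding coef_def by simp
    also have "exp (- (2 * a i * t i)) * exp (2 * sig\<^sup>2 * (t i)\<^sup>2) = exp (- L i)"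
      using key[OF i] by (simp add: exp_add[symmetric])
    also have "2 * real (N i) * v i * exp (- L i) = v i * (delta / 4)"
      using expL[OF i] N0[OF i] by simp
    finally show ?thesis .
  qed
  have intW: "(\<integral>\<^sup>+\<omega>. ennreal (W \<omega>) \<partial>P) = ennreal (delta / 4)"
  proof -
    have "(\<integral>\<^sup>+\<omega>. ennreal (W \<omega>) \<partial>P) = (\<integral>\<^sup>+\<omega>. (\<Sum>i<M. \<Sum>j<N i. ennreal (F i j \<omega>)) \<partial>P)"
    proof (rule nn_integral_cong)
      fix \<omega>
      have "ennreal (W \<omega>) = (\<Sum>i<M. ennreal (\<Sum>j<N i. F i j \<omega>))"
        unfolding W_def by (rule sum_ennreal[symmetric]) (auto intro!: sum_nonneg F_nn)
      also have "\<dots> = (\<Sum>i<M. \<Sum>j<N i. ennreal (F i j \<omega>))"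
        by (intro sum.cong refl sum_ennreal[symmetric]) (auto intro: F_nn)
      finally show "ennreal (W \<omega>) = (\<Sum>i<M. \<Sum>j<N i. ennreal (F i j \<omega>))" .
    qed
    also have "\<dots> = (\<Sum>i<M. \<integral>\<^sup>+\<omega>. (\<Sum>j<N i. ennreal (F i j \<omega>)) \<partial>P)"
      using Fm by (intro nn_integral_sum) (auto intro!: borel_measurable_sum)
    also have "\<dots> = (\<Sum>i<M. \<Sum>j<N i. \<integral>\<^sup>+\<omega>. ennreal (F i j \<omega>) \<partial>P)"
      using Fm by (intro sum.cong refl nn_integral_sum) auto
    also have "\<dots> = (\<Sum>i<M. \<Sum>j<N i. ennreal (coef i * (4 * exp (2 * sig\<^sup>2 * (t i)\<^sup>2))))"
      using intF by (intro sum.cong refl) auto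
    also have "\<dots> = (\<Sum>i<M. ennreal (v i * (delta / 4)))"
    proof (intro sum.cong refl)
      fix i assume "i \<in> {..<M}"
      then have i: "i < M" by simp
      have "(\<Sum>j<N i. ennreal (coef i * (4 * exp (2 * sig\<^sup>2 * (t i)\<^sup>2))))
          = ennreal (real (N i) * (coef i * (4 * exp (2 * sig\<^sup>2 * (t i)\<^sup>2))))"
        using coef_nn[OF i] by (simp add: ennreal_mult' ennreal_of_nat_eq_real_of_nat)
      then show "(\<Sum>j<N i. ennreal (coef i * (4 * exp (2 * sig\<^sup>2 * (t i)\<^sup>2)))) = ennreal (v i * (delta / 4))"
        using termeq[OF i] by simp
    qed
    also have "\<dots> = ennreal (\<Sum>i<M. v i * (delta / 4))"
      using v_nn d0 by (intro sum_ennreal) simp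
    also have "(\<Sum>i<M. v i * (delta / 4)) = delta / 4"
    proof -
      have "(\<Sum>i<M. v i * (delta / 4)) = (\<Sum>i<M. v i) * (delta / 4)" by (rule sum_distrib_right[symmetric])
      then show ?thesis using v_sum by simp
    qed
    finally show ?thesis .
  qed
  have "emeasure P (space P - T) = (\<integral>\<^sup>+\<omega>. indicator (space P - T) \<omega> \<partial>P)"
    using T by simp
  also have "\<dots> \<le> (\<integral>\<^sup>+\<omega>. ennreal (W \<omega>) \<partial>P)"
  proof (rule nn_integral_mono)
    fix \<omega> assume om: "\<omega> \<in> space P"
    show "indicator (space P - T) \<omega> \<le> ennreal (W \<omega>)"
    proof (cases "\<omega> \<in> T")
      case True then show ?thesis by simp
    next
      case False
      then have "1 \<le> W \<omega>" using stepA om by simp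
      then show ?thesis using om False by (simp add: indicator_def)
    qed
  qed
  also have "\<dots> = ennreal (delta / 4)" by (rule intW)
  finally have "measure P (space P - T) \<le> delta / 4"
    using d0 by (simp add: emeasure_eq_measure)
  moreover have "measure P (space P - T) = 1 - measure P T" using prob_compl[OF T] by simp
  ultimately show ?thesis by simp
qed


lemma aux_distr: "x * y * ((\<Sum>i\<in>I. u i * v i) * T) = (\<Sum>i\<in>I. (x * u i) * (y * v i) * (T::real))"
  by (simp add: sum_distrib_left sum_distrib_right mult.assoc mult.left_commute)

lemma inner_pow_psd:
  fixes p :: "nat \<Rightarrow> real ^ 'd"
  shows "0 \<le> (\<Sum>a\<in>A. \<Sum>b\<in>A. c a * c b * (inner (p a) (p b)) ^ n)"
proof (induction n arbitrary: c)
  case 0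
  have "(\<Sum>a\<in>A. \<Sum>b\<in>A. c a * c b * (inner (p a) (p b)) ^ 0) = (\<Sum>a\<in>A. c a)\<^sup>2"
    by (simp add: power2_eq_square sum_product)
  then show ?case by simp
next
  case (Suc n)
  have "(\<Sum>a\<in>A. \<Sum>b\<in>A. c a * c b * (inner (p a) (p b)) ^ Suc n)
      = (\<Sum>a\<in>A. \<Sum>b\<in>A. \<Sum>i\<in>UNIV. (c a * p a $ i) * (c b * p b $ i) * (inner (p a) (p b)) ^ n)"
    apply (intro sum.cong refl)
    apply (subst power_Suc)
    apply (subst (1) inner_vec_def)
    unfolding inner_real_def by (rule aux_distr)
  also have "\<dots> = (\<Sum>a\<in>A. \<Sum>i\<in>UNIV. \<Sum>b\<in>A. (c a * p a $ i) * (c b * p b $ i) * (inner (p a) (p b)) ^ n)"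
    by (rule sum.cong[OF refl], rule sum.swap)
  also have "\<dots> = (\<Sum>i\<in>UNIV. \<Sum>a\<in>A. \<Sum>b\<in>A. (c a * p a $ i) * (c b * p b $ i) * (inner (p a) (p b)) ^ n)"
    by (rule sum.swap)
  also have "\<dots> \<ge> 0"
    by (rule sum_nonneg) (rule Suc.IH)
  finally show ?case by simp
qed

lemma exp_inner_psd:
  fixes p :: "nat \<Rightarrow> real ^ 'd" assumes r: "0 \<le> r"
  shows "0 \<le> (\<Sum>a\<in>A. \<Sum>b\<in>A. c a * c b * exp (r * inner (p a) (p b)))"
proof -
  have S1: "(\<lambda>n. \<Sum>a\<in>A. \<Sum>b\<in>A. c a * c b * ((r * inner (p a) (p b)) ^ n /\<^sub>R fact n))
        sums (\<Sum>a\<in>A. \<Sum>b\<in>A. c a * c b * exp (r * inner (p a) (p b)))"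
    by (intro sums_sum sums_mult exp_converges)
  have S0: "(\<lambda>n. 0::real) sums 0" by (rule sums_zero)
  have T: "0 \<le> (\<Sum>a\<in>A. \<Sum>b\<in>A. c a * c b * ((r * inner (p a) (p b)) ^ n /\<^sub>R fact n))" for n
  proof -
    have "(\<Sum>a\<in>A. \<Sum>b\<in>A. c a * c b * ((r * inner (p a) (p b)) ^ n /\<^sub>R fact n))
       = (r ^ n / fact n) * (\<Sum>a\<in>A. \<Sum>b\<in>A. c a * c b * (inner (p a) (p b)) ^ n)"
      by (simp add: sum_distrib_left power_mult_distrib field_simps)
    also have "\<dots> \<ge> 0" using r inner_pow_psd[where c=c and A=A and p=p and n=n] by simp
    finally show ?thesis .
  qed
  show ?thesis by (rule sums_le[OF T S0 S1])
qed

lemma se_kernel_psd: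
  fixes p :: "nat \<Rightarrow> real ^ 'd" assumes s: "0 \<le> s"
  shows "0 \<le> (\<Sum>a\<in>A. \<Sum>b\<in>A. c a * c b * se_kernel s l (p a) (p b))"
proof -
  define q where "q = 1 / (2 * l\<^sup>2)"
  have q: "0 \<le> q" unfolding q_def by simp
  have eq: "se_kernel s l x y = s * (exp (- q * inner x x) * exp (- q * inner y y) * exp ((2*q) * inner x y))"
    for x y :: "real ^ 'd"
  proof -
    have "(norm (x - y))\<^sup>2 = inner x x + inner y y - 2 * inner x y"
      by (simp add: power2_norm_eq_inner inner_diff_left inner_diff_right inner_commute)
    then have "- (norm (x - y))\<^sup>2 / (2 * l\<^sup>2) = - q * inner x x + - q * inner y y + (2*q) * inner x y"
      unfolding q_def by (cases "l = 0") (simp_all add: field_simps)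
    then have "exp (- (norm (x - y))\<^sup>2 / (2 * l\<^sup>2)) = exp (- q * inner x x + - q * inner y y + (2*q) * inner x y)"
      by simp
    then show ?thesis unfolding se_kernel_def by (simp only: exp_add)
  qed
  define c' where "c' a = c a * exp (- q * inner (p a) (p a))" for a
  have "(\<Sum>a\<in>A. \<Sum>b\<in>A. c a * c b * se_kernel s l (p a) (p b))
      = s * (\<Sum>a\<in>A. \<Sum>b\<in>A. c' a * c' b * exp ((2*q) * inner (p a) (p b)))"
    unfolding eq c'_def by (simp add: sum_distrib_left algebra_simps)
  also have "\<dots> \<ge> 0" using s exp_inner_psd[where r="2*q" and c=c' and A=A and p=p] q by simp
  finally show ?thesis .
qed

no_notation Finite_Cartesian_Product.vec_nth (infixl \<open>$\<close> 90)

lemma cs_abs: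
  fixes a b :: "nat \<Rightarrow> real"
  shows "\<bar>\<Sum>i\<in>I. a i * b i\<bar> \<le> sqrt (\<Sum>i\<in>I. (a i)\<^sup>2) * sqrt (\<Sum>i\<in>I. (b i)\<^sup>2)"
proof -
  have "(\<Sum>i\<in>I. a i * b i)\<^sup>2 \<le> (\<Sum>i\<in>I. (a i)\<^sup>2) * (\<Sum>i\<in>I. (b i)\<^sup>2)"
    by (rule Cauchy_Schwarz_ineq_sum)
  then have "sqrt ((\<Sum>i\<in>I. a i * b i)\<^sup>2) \<le> sqrt ((\<Sum>i\<in>I. (a i)\<^sup>2) * (\<Sum>i\<in>I. (b i)\<^sup>2))"
    using real_sqrt_le_mono by blast
  then show ?thesis by (simp add: real_sqrt_mult)
qed

lemma quad_form:
  fixes k :: "'a \<Rightarrow> 'a \<Rightarrow> real"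
  assumes u: "u \<in> carrier_vec (length xs)"
  shows "u \<bullet> ((gram_mat k xs + lam \<cdot>\<^sub>m 1\<^sub>m (length xs)) *\<^sub>v u)
     = (\<Sum>a<length xs. \<Sum>b<length xs. u $ a * u $ b * k (xs!a) (xs!b)) + lam * (\<Sum>a<length xs. (u $ a)\<^sup>2)"
proof -
  let ?n = "length xs"
  let ?A = "gram_mat k xs + lam \<cdot>\<^sub>m 1\<^sub>m (length xs)"
  have Aab: "?A $$ (a, b) = k (xs!a) (xs!b) + (if a = b then lam else 0)" if "a < ?n" "b < ?n" for a b
    using that by (simp add: gram_mat_def)
  have Au: "(?A *\<^sub>v u) $ a = (\<Sum>b<?n. (k (xs!a) (xs!b) + (if a = b then lam else 0)) * u $ b)" if "a < ?n" for a
    using that u Aab by (simp add: gram_mat_def scalar_prod_def lessThan_atLeast0 row_def)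
  have "u \<bullet> (?A *\<^sub>v u) = (\<Sum>a<?n. u $ a * (\<Sum>b<?n. (k (xs!a) (xs!b) + (if a = b then lam else 0)) * u $ b))"
    using u Au by (simp add: scalar_prod_def lessThan_atLeast0 gram_mat_def)
  also have "\<dots> = (\<Sum>a<?n. (\<Sum>b<?n. u $ a * u $ b * k (xs!a) (xs!b)) + lam * (u $ a)\<^sup>2)"
  proof (rule sum.cong[OF refl])
    fix a assume a: "a \<in> {..<?n}"
    have "(\<Sum>b<?n. (k (xs!a) (xs!b) + (if a = b then lam else 0)) * u $ b)
        = (\<Sum>b<?n. k (xs!a) (xs!b) * u $ b + (if a = b then lam * u $ b else 0))"
      by (intro sum.cong) (auto simp: distrib_right)
    also have "\<dots> = (\<Sum>b<?n. k (xs!a) (xs!b) * u $ b) + (\<Sum>b<?n. (if a = b then lam * u $ b else 0))"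
      by (rule sum.distrib)
    also have "(\<Sum>b<?n. (if a = b then lam * u $ b else 0)) = lam * u $ a"
      using a by (simp add: sum.delta)
    finally show "u $ a * (\<Sum>b<?n. (k (xs!a) (xs!b) + (if a = b then lam else 0)) * u $ b)
        = (\<Sum>b<?n. u $ a * u $ b * k (xs!a) (xs!b)) + lam * (u $ a)\<^sup>2"
      by (simp add: sum_distrib_left algebra_simps power2_eq_square)
  qed
  also have "\<dots> = (\<Sum>a<?n. \<Sum>b<?n. u $ a * u $ b * k (xs!a) (xs!b)) + lam * (\<Sum>a<?n. (u $ a)\<^sup>2)"
    by (simp add: sum.distrib sum_distrib_left)
  finally show ?thesis .
qed

lemma post_bound:
  fixes k :: "'a \<Rightarrow> 'a \<Rightarrow> real" and xs :: "'a list"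
  assumes psd: "\<And>c. 0 \<le> (\<Sum>a<length xs. \<Sum>b<length xs. c a * c b * k (xs!a) (xs!b))"
    and kb: "\<And>j. j < length xs \<Longrightarrow> \<bar>k (xs!j) x\<bar> \<le> 1"
    and sg: "0 < lam"
    and v: "v \<in> carrier_vec (length xs)" and vb: "\<And>j. j < length xs \<Longrightarrow> \<bar>v $ j\<bar> \<le> B"
  shows "\<bar>kvec k xs x \<bullet> (reg_inv k lam xs *\<^sub>v v)\<bar> \<le> real (length xs) / lam * B"
proof -
  let ?n = "length xs"
  let ?A = "gram_mat k xs + lam \<cdot>\<^sub>m 1\<^sub>m (length xs)"
  have Ac: "?A \<in> carrier_mat ?n ?n" by (simp add: gram_mat_def)
  have qf: "lam * (\<Sum>a<?n. (u $ a)\<^sup>2) \<le> u \<bullet> (?A *\<^sub>v u)" if "u \<in> carrier_vec ?n" for u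
  proof -
    have "0 \<le> (\<Sum>a<?n. \<Sum>b<?n. u $ a * u $ b * k (xs!a) (xs!b))" by (rule psd)
    then show ?thesis unfolding quad_form[OF that, of k lam] by linarith
  qed
  obtain R where R: "mat_inverse ?A = Some R"
  proof (cases "mat_inverse ?A")
    case None
    have nu: "?A \<notin> Units (ring_mat TYPE(real) ?n ())" by (rule mat_inverse(1)[OF Ac None])
    have "det ?A = 0"
    proof (rule ccontr)
      assume "det ?A \<noteq> 0"
      from det_non_zero_imp_unit[OF Ac this, of "()"] nu show False by simp
    qed
    then have "\<exists>u. u \<in> carrier_vec ?n \<and> u \<noteq> 0\<^sub>v ?n \<and> ?A *\<^sub>v u = 0\<^sub>v ?n"
      by (simp only: det_0_iff_vec_prod_zero[OF Ac])
    then obtain u where u: "u \<in> carrier_vec ?n" "u \<noteq> 0\<^sub>v ?n" "?A *\<^sub>v u = 0\<^sub>v ?n"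
      by blast
    have "lam * (\<Sum>a<?n. (u $ a)\<^sup>2) \<le> u \<bullet> (?A *\<^sub>v u)" by (rule qf[OF u(1)])
    also have "u \<bullet> (?A *\<^sub>v u) = 0" using u(3) u(1) by simp
    finally have "lam * (\<Sum>a<?n. (u $ a)\<^sup>2) \<le> 0" .
    then have "(\<Sum>a<?n. (u $ a)\<^sup>2) \<le> 0" using sg by (simp add: mult_le_0_iff)
    moreover have "0 \<le> (\<Sum>a<?n. (u $ a)\<^sup>2)" by (rule sum_nonneg) simp
    ultimately have "(\<Sum>a<?n. (u $ a)\<^sup>2) = 0" by linarith
    then have "\<forall>a\<in>{..<?n}. (u $ a)\<^sup>2 = 0"
      by (subst (asm) sum_nonneg_eq_0_iff) auto
    then have "u = 0\<^sub>v ?n" using u(1) by (intro eq_vecI) auto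
    with u(2) show ?thesis by simp
  next
    case (Some R')
    then show ?thesis by (rule that)
  qed
  have AR: "?A * R = 1\<^sub>m ?n" and Rc: "R \<in> carrier_mat ?n ?n" using mat_inverse(2)[OF Ac R] by auto
  have rinv: "reg_inv k lam xs = R" unfolding reg_inv_def using R by simp
  define u where "u = R *\<^sub>v v"
  have uc: "u \<in> carrier_vec ?n" unfolding u_def using Rc v by simp
  have Au: "?A *\<^sub>v u = v"
    unfolding u_def using Ac Rc v AR by (simp add: assoc_mult_mat_vec[symmetric, of _ ?n ?n _ ?n])
  define U where "U = sqrt (\<Sum>a<?n. (u $ a)\<^sup>2)"
  define V where "V = sqrt (\<Sum>a<?n. (v $ a)\<^sup>2)"
  have U0: "0 \<le> U" unfolding U_def by (simp add: sum_nonneg)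
  have uv: "u \<bullet> v = (\<Sum>a<?n. u $ a * v $ a)" using v by (simp add: scalar_prod_def lessThan_atLeast0)
  have "lam * U\<^sup>2 \<le> U * V"
  proof -
    have "lam * U\<^sup>2 = lam * (\<Sum>a<?n. (u $ a)\<^sup>2)" unfolding U_def by (simp add: sum_nonneg)
    also have "\<dots> \<le> u \<bullet> v" using qf[OF uc] Au by simp
    also have "\<dots> \<le> \<bar>\<Sum>a<?n. u $ a * v $ a\<bar>" using uv by simp
    also have "\<dots> \<le> U * V" unfolding U_def V_def by (rule cs_abs)
    finally show ?thesis .
  qed
  have V0: "0 \<le> V" unfolding V_def by (simp add: sum_nonneg)
  have UV: "lam * U \<le> V"
  proof (cases "U = 0")
    case True then show ?thesis using V0 by simp
  next
    case False
    then have "0 < U" using U0 by simp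
    have e: "lam * U\<^sup>2 = U * (lam * U)" by (simp add: power2_eq_square mult.commute mult.left_commute)
    have "U * (lam * U) \<le> U * V" using \<open>lam * U\<^sup>2 \<le> U * V\<close> e by linarith
    then show ?thesis using mult_le_cancel_left_pos[OF \<open>0 < U\<close>] by blast
  qed
  have "V \<le> sqrt (real ?n * B\<^sup>2)"
  proof -
    have "(\<Sum>a<?n. (v $ a)\<^sup>2) \<le> (\<Sum>a<?n. B\<^sup>2)"
    proof (rule sum_mono)
      fix a assume "a \<in> {..<?n}"
      then have "\<bar>v $ a\<bar> \<le> B" using vb by simp
      then have "\<bar>v $ a\<bar>\<^sup>2 \<le> B\<^sup>2" by (rule power_mono) simp
      then show "(v $ a)\<^sup>2 \<le> B\<^sup>2" by (simp only: power2_abs)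
    qed
    then show ?thesis unfolding V_def by simp
  qed
  have B0: "?n > 0 \<Longrightarrow> 0 \<le> B" using vb[of 0] by simp
  have Vb: "V \<le> sqrt (real ?n) * B"
  proof (cases "?n = 0")
    case True then show ?thesis unfolding V_def by simp
  next
    case False
    then have "sqrt (real ?n * B\<^sup>2) = sqrt (real ?n) * B" using B0 by (simp add: real_sqrt_mult)
    with \<open>V \<le> sqrt (real ?n * B\<^sup>2)\<close> show ?thesis by simp
  qed
  have Kb: "sqrt (\<Sum>a<?n. (k (xs!a) x)\<^sup>2) \<le> sqrt (real ?n)"
  proof -
    have "(\<Sum>a<?n. (k (xs!a) x)\<^sup>2) \<le> (\<Sum>a<?n. 1)"
    proof (rule sum_mono)
      fix a assume "a \<in> {..<?n}"
      then have "\<bar>k (xs!a) x\<bar> \<le> 1" using kb by simp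
      then have "\<bar>k (xs!a) x\<bar>\<^sup>2 \<le> 1\<^sup>2" by (rule power_mono) simp
      then show "(k (xs!a) x)\<^sup>2 \<le> 1" by (simp only: power2_abs power_one)
    qed
    then show ?thesis by simp
  qed
  have eqk: "kvec k xs x \<bullet> (reg_inv k lam xs *\<^sub>v v) = (\<Sum>a<?n. k (xs!a) x * u $ a)"
    using uc rinv by (simp add: u_def[symmetric] kvec_def scalar_prod_def lessThan_atLeast0)
  have csk: "\<bar>\<Sum>a<?n. k (xs!a) x * u $ a\<bar> \<le> sqrt (\<Sum>a<?n. (k (xs!a) x)\<^sup>2) * sqrt (\<Sum>a<?n. (u $ a)\<^sup>2)"
    by (rule cs_abs)
  have UB: "U \<le> sqrt (real ?n) * B / lam"
  proof -
    have "U \<le> V / lam" using UV sg by (simp add: pos_le_divide_eq mult.commute)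
    also have "\<dots> \<le> sqrt (real ?n) * B / lam" using Vb sg by (simp add: divide_right_mono)
    finally show ?thesis .
  qed
  have "\<bar>kvec k xs x \<bullet> (reg_inv k lam xs *\<^sub>v v)\<bar> \<le> sqrt (\<Sum>a<?n. (k (xs!a) x)\<^sup>2) * U"
    unfolding eqk U_def by (rule csk)
  also have "\<dots> \<le> sqrt (real ?n) * U" using Kb U0 by (rule mult_right_mono)
  also have "\<dots> \<le> sqrt (real ?n) * (sqrt (real ?n) * B / lam)"
    using UB by (rule mult_left_mono) simp
  also have "\<dots> = (sqrt (real ?n) * sqrt (real ?n)) * B / lam"
    by (simp only: times_divide_eq_right mult.assoc)
  also have "\<dots> = real ?n / lam * B" by simp
  finally show ?thesis .
qed


lemma se_kernel_le1:
  assumes "0 < s" "s \<le> 1"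
  shows "\<bar>se_kernel s l x y\<bar> \<le> 1"
proof -
  have "- (norm (x - y))\<^sup>2 / (2 * l\<^sup>2) \<le> 0" by (simp add: divide_nonpos_nonneg)
  then have e: "exp (- (norm (x - y))\<^sup>2 / (2 * l\<^sup>2)) \<le> 1" by simp
  have "\<bar>se_kernel s l x y\<bar> = s * exp (- (norm (x - y))\<^sup>2 / (2 * l\<^sup>2))"
    unfolding se_kernel_def using assms by simp
  also have "\<dots> \<le> 1 * 1" using assms e by (intro mult_mono) auto
  finally show ?thesis by simp
qed

lemma sp_expand:
  fixes u :: "real vec" and R :: "real mat"
  assumes "y \<in> carrier_vec n"
  shows "u \<bullet> (R *\<^sub>v y) = (\<Sum>i\<in>{0..<dim_row R}. u $ i * (\<Sum>j\<in>{0..<n}. row R i $ j * y $ j))"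
  using assms by (auto simp: scalar_prod_def intro!: sum.cong)

lemma lin_diff:
  fixes u :: "real vec" and R :: "real mat"
  assumes y1: "y1 \<in> carrier_vec n" and y2: "y2 \<in> carrier_vec n"
  shows "u \<bullet> (R *\<^sub>v y1) - u \<bullet> (R *\<^sub>v y2) = u \<bullet> (R *\<^sub>v (y1 - y2))"
proof -
  have y3: "y1 - y2 \<in> carrier_vec n" using y1 y2 by simp
  have "u \<bullet> (R *\<^sub>v y1) - u \<bullet> (R *\<^sub>v y2)
     = (\<Sum>i\<in>{0..<dim_row R}. u $ i * (\<Sum>j\<in>{0..<n}. row R i $ j * y1 $ j) - u $ i * (\<Sum>j\<in>{0..<n}. row R i $ j * y2 $ j))"
    unfolding sp_expand[OF y1] sp_expand[OF y2] by (rule sum_subtractf[symmetric])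
  also have "\<dots> = (\<Sum>i\<in>{0..<dim_row R}. u $ i * (\<Sum>j\<in>{0..<n}. row R i $ j * (y1 - y2) $ j))"
  proof (rule sum.cong[OF refl])
    fix i
    have "(\<Sum>j\<in>{0..<n}. row R i $ j * (y1 - y2) $ j) = (\<Sum>j\<in>{0..<n}. row R i $ j * y1 $ j - row R i $ j * y2 $ j)"
      using y1 y2 by (intro sum.cong refl) (simp add: right_diff_distrib)
    also have "\<dots> = (\<Sum>j\<in>{0..<n}. row R i $ j * y1 $ j) - (\<Sum>j\<in>{0..<n}. row R i $ j * y2 $ j)"
      by (rule sum_subtractf)
    finally show "u $ i * (\<Sum>j\<in>{0..<n}. row R i $ j * y1 $ j) - u $ i * (\<Sum>j\<in>{0..<n}. row R i $ j * y2 $ j)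
        = u $ i * (\<Sum>j\<in>{0..<n}. row R i $ j * (y1 - y2) $ j)" by (simp add: right_diff_distrib)
  qed
  also have "\<dots> = u \<bullet> (R *\<^sub>v (y1 - y2))" unfolding sp_expand[OF y3] ..
  finally show ?thesis .
qed

lemma meas_kv:
  fixes u :: "real vec" and R :: "real mat" and P :: "'w measure"
  assumes h: "\<And>j. j < n \<Longrightarrow> h j \<in> borel_measurable P"
  shows "(\<lambda>\<omega>. u \<bullet> (R *\<^sub>v vec n (\<lambda>j. h j \<omega>))) \<in> borel_measurable P"
proof -
  have eq: "(\<lambda>\<omega>. u \<bullet> (R *\<^sub>v vec n (\<lambda>j. h j \<omega>)))
     = (\<lambda>\<omega>. \<Sum>i\<in>{0..<dim_row R}. u $ i * (\<Sum>j\<in>{0..<n}. row R i $ j * h j \<omega>))"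
  proof (rule ext)
    fix \<omega>
    show "u \<bullet> (R *\<^sub>v vec n (\<lambda>j. h j \<omega>)) = (\<Sum>i\<in>{0..<dim_row R}. u $ i * (\<Sum>j\<in>{0..<n}. row R i $ j * h j \<omega>))"
      unfolding sp_expand[OF vec_carrier] by (auto intro!: sum.cong)
  qed
  show ?thesis unfolding eq
    by (intro borel_measurable_sum borel_measurable_times borel_measurable_const) (auto intro: h)
qed

lemma acq_diff:
  "acq k sig lam tau b nu M w Xm Y1 Xh Yh x - acq k sig lam tau b nu M w Xm Y2 Xh Yh x
   = nu * (\<Sum>i<M. w i * (post_mean k (sig\<^sup>2) (Xm i) (Y1 i) x - post_mean k (sig\<^sup>2) (Xm i) (Y2 i) x))"
proof -
  have "(\<Sum>i<M. w i * (post_mean k (sig\<^sup>2) (Xm i) (Y1 i) x + tau * post_sd k (sig\<^sup>2) (Xm i) x))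
      - (\<Sum>i<M. w i * (post_mean k (sig\<^sup>2) (Xm i) (Y2 i) x + tau * post_sd k (sig\<^sup>2) (Xm i) x))
      = (\<Sum>i<M. w i * (post_mean k (sig\<^sup>2) (Xm i) (Y1 i) x - post_mean k (sig\<^sup>2) (Xm i) (Y2 i) x))"
    by (simp add: sum_subtractf[symmetric] algebra_simps)
  then show ?thesis unfolding acq_def by (simp add: algebra_simps)
qed


theorem lemma3:
  fixes P :: "'\<omega> measure"
    and D :: "(real ^ 'd) set"
    and s l sig lam tau delta :: real
    and beta nu :: "nat \<Rightarrow> real"
    and M :: nat and N :: "nat \<Rightarrow> nat" and w :: "nat \<Rightarrow> real"
    and f :: "real ^ 'd \<Rightarrow> real" and fm :: "nat \<Rightarrow> real ^ 'd \<Rightarrow> real"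
    and xm :: "nat \<Rightarrow> nat \<Rightarrow> real ^ 'd"
    and eps epst :: "nat \<Rightarrow> nat \<Rightarrow> '\<omega> \<Rightarrow> real"
    and xq :: "nat \<Rightarrow> '\<omega> \<Rightarrow> real ^ 'd" and epsq :: "nat \<Rightarrow> '\<omega> \<Rightarrow> real"
  assumes "prob_space P"
    and "finite D"
    and "0 < s" "s \<le> 1" "0 < l"
    and "0 < sig" "0 < lam" "0 < tau"
    and "0 < delta" "delta < 1"
    and "\<And>t. 0 < beta t"
    and "\<And>t. 0 \<le> nu t \<and> nu t \<le> 1"
    and "\<And>i. i < M \<Longrightarrow> 0 \<le> w i"
    and "(\<Sum>i<M. w i) = 1"
    and "\<And>i. i < M \<Longrightarrow> 0 < N i"
    and "prob_space.indep_vars P (\<lambda>_. borel)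
           (\<lambda>(b, i, j). if b then epst i j else eps i j)
           {(b, i, j). i < M \<and> j < N i}"
    and "\<And>i j. i < M \<Longrightarrow> j < N i \<Longrightarrow>
           distributed P lborel (eps i j) (normal_density 0 sig)"
    and "\<And>i j. i < M \<Longrightarrow> j < N i \<Longrightarrow>
           distributed P lborel (epst i j) (normal_density 0 sig)"
  shows
    "let k = se_kernel s l;
         Xm = meta_inputs xm N;
         Ybar = (\<lambda>\<omega> i. map (\<lambda>j. fm i (xm i j) + eps i j \<omega>) [0..<N i]);
         Ytil = (\<lambda>\<omega> i. map (\<lambda>j. f (xm i j) + epst i j \<omega>) [0..<N i]);
         Xh = (\<lambda>t \<omega>. map (\<lambda>u. xq u \<omega>) [1..<t]);
         Yh = (\<lambda>t \<omega>. map (\<lambda>u. f (xq u \<omega>) + epsq u \<omega>) [1..<t]);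
         d = (\<lambda>i. Max ((\<lambda>j. \<bar>f (xm i j) - fm i (xm i j)\<bar>) ` {..<N i}));
         alpha = (\<Sum>i<M. w i * (real (N i) / sig\<^sup>2)
                    * (2 * sqrt (2 * sig\<^sup>2 * ln (8 * real (N i) / delta)) + d i))
     in measure P {\<omega> \<in> space P. \<forall>t\<ge>1. \<forall>x\<in>D.
          \<bar>acq k sig lam tau (beta t) (nu t) M w Xm (Ybar \<omega>) (Xh t \<omega>) (Yh t \<omega>) x
           - acq k sig lam tau (beta t) (nu t) M w Xm (Ytil \<omega>) (Xh t \<omega>) (Yh t \<omega>) x\<bar>
          \<le> nu t * alpha} \<ge> 1 - delta / 4"
proof -
  note ps = assms(1) and finD = assms(2) and s0 = assms(3) and s1 = assms(4)
  note sg = assms(6) and d0 = assms(9) and d1 = assms(10) and nu01 = assms(12)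
  note w0 = assms(13) and w1 = assms(14) and N0 = assms(15) and dE = assms(17) and dT = assms(18)
  define k :: "real ^ 'd \<Rightarrow> real ^ 'd \<Rightarrow> real" where "k = se_kernel s l"
  define Xm where "Xm = meta_inputs xm N"
  define Ybar where "Ybar = (\<lambda>\<omega> i. map (\<lambda>j. fm i (xm i j) + eps i j \<omega>) [0..<N i])"
  define Ytil where "Ytil = (\<lambda>\<omega> i. map (\<lambda>j. f (xm i j) + epst i j \<omega>) [0..<N i])"
  define Xh where "Xh = (\<lambda>t \<omega>. map (\<lambda>u. xq u \<omega>) [1..<t])"
  define Yh where "Yh = (\<lambda>t \<omega>. map (\<lambda>u. f (xq u \<omega>) + epsq u \<omega>) [1..<t])"
  define d where "d = (\<lambda>i. Max ((\<lambda>j. \<bar>f (xm i j) - fm i (xm i j)\<bar>) ` {..<N i}))"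
  define alpha where "alpha = (\<Sum>i<M. w i * (real (N i) / sig\<^sup>2)
                    * (2 * sqrt (2 * sig\<^sup>2 * ln (8 * real (N i) / delta)) + d i))"
  define g where "g i j \<omega> = fm i (xm i j) + eps i j \<omega> - (f (xm i j) + epst i j \<omega>)" for i j \<omega>
  define S where "S x \<omega> = (\<Sum>i<M. w i * (kvec k (Xm i) x \<bullet> (reg_inv k (sig\<^sup>2) (Xm i) *\<^sub>v vec (N i) (\<lambda>j. g i j \<omega>))))" for x \<omega>
  define m where "m i \<omega> = Max ((\<lambda>j. \<bar>eps i j \<omega> - epst i j \<omega>\<bar>) ` {..<N i})" for i \<omega>
  define T where "T = {\<omega> \<in> space P. \<forall>t\<ge>1. \<forall>x\<in>D.
          \<bar>acq k sig lam tau (beta t) (nu t) M w Xm (Ybar \<omega>) (Xh t \<omega>) (Yh t \<omega>) x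
           - acq k sig lam tau (beta t) (nu t) M w Xm (Ytil \<omega>) (Xh t \<omega>) (Yh t \<omega>) x\<bar>
          \<le> nu t * alpha}"
  have lenXm: "length (Xm i) = N i" for i unfolding Xm_def meta_inputs_def by simp
  have nthXm: "Xm i ! j = xm i j" if "j < N i" for i j unfolding Xm_def meta_inputs_def using that by simp
  have vdiff: "vec_of_list (Ybar \<omega> i) - vec_of_list (Ytil \<omega> i) = vec (N i) (\<lambda>j. g i j \<omega>)" for \<omega> i
    by (rule eq_vecI) (simp_all add: Ybar_def Ytil_def vec_of_list_index g_def)
  have pmdiff: "post_mean k (sig\<^sup>2) (Xm i) (Ybar \<omega> i) x - post_mean k (sig\<^sup>2) (Xm i) (Ytil \<omega> i) x
      = kvec k (Xm i) x \<bullet> (reg_inv k (sig\<^sup>2) (Xm i) *\<^sub>v vec (N i) (\<lambda>j. g i j \<omega>))" for i \<omega> x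
  proof -
    have c1: "vec_of_list (Ybar \<omega> i) \<in> carrier_vec (N i)"
      unfolding Ybar_def by (rule carrier_vecI) (simp del: vec_of_list_map)
    have c2: "vec_of_list (Ytil \<omega> i) \<in> carrier_vec (N i)"
      unfolding Ytil_def by (rule carrier_vecI) (simp del: vec_of_list_map)
    show ?thesis unfolding post_mean_def lin_diff[OF c1 c2] vdiff ..
  qed
  have acqdiff: "acq k sig lam tau b nu' M w Xm (Ybar \<omega>) H1 H2 x - acq k sig lam tau b nu' M w Xm (Ytil \<omega>) H1 H2 x
      = nu' * S x \<omega>" for b nu' H1 H2 x \<omega>
    unfolding acq_diff S_def pmdiff ..
  have mge: "\<bar>eps i j \<omega> - epst i j \<omega>\<bar> \<le> m i \<omega>" if "j < N i" for i j \<omega>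
    unfolding m_def using that by (intro Max_ge) auto
  have dge: "\<bar>f (xm i j) - fm i (xm i j)\<bar> \<le> d i" if "j < N i" for i j
    unfolding d_def using that by (intro Max_ge) auto
  have Sbound: "\<bar>S x \<omega>\<bar> \<le> (\<Sum>i<M. w i * (real (N i) / sig\<^sup>2 * (m i \<omega> + d i)))" for x \<omega>
  proof -
    have "\<bar>S x \<omega>\<bar> \<le> (\<Sum>i<M. \<bar>w i * (kvec k (Xm i) x \<bullet> (reg_inv k (sig\<^sup>2) (Xm i) *\<^sub>v vec (N i) (\<lambda>j. g i j \<omega>)))\<bar>)"
      unfolding S_def by (rule sum_abs)
    also have "\<dots> \<le> (\<Sum>i<M. w i * (real (N i) / sig\<^sup>2 * (m i \<omega> + d i)))"
    proof (rule sum_mono)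
      fix i assume "i \<in> {..<M}"
      then have i: "i < M" by simp
      have psd: "0 \<le> (\<Sum>a<length (Xm i). \<Sum>b<length (Xm i). c a * c b * k (Xm i ! a) (Xm i ! b))" for c
        unfolding k_def using se_kernel_psd[where s=s and c=c and A="{..<length (Xm i)}" and p="\<lambda>a. Xm i ! a" and l=l] s0
        by simp
      have kb: "\<bar>k (Xm i ! j) x\<bar> \<le> 1" for j unfolding k_def by (rule se_kernel_le1[OF s0 s1])
      have vc: "vec (N i) (\<lambda>j. g i j \<omega>) \<in> carrier_vec (length (Xm i))" by (simp add: lenXm)
      have vb: "\<bar>vec (N i) (\<lambda>j. g i j \<omega>) $ j\<bar> \<le> m i \<omega> + d i" if "j < length (Xm i)" for j
      proof -
        have j: "j < N i" using that lenXm by simp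
        have "\<bar>vec (N i) (\<lambda>j. g i j \<omega>) $ j\<bar> = \<bar>(fm i (xm i j) - f (xm i j)) + (eps i j \<omega> - epst i j \<omega>)\<bar>"
          using j unfolding g_def by simp
        also have "\<dots> \<le> \<bar>f (xm i j) - fm i (xm i j)\<bar> + \<bar>eps i j \<omega> - epst i j \<omega>\<bar>"
          by (metis abs_minus_commute abs_triangle_ineq)
        also have "\<dots> \<le> d i + m i \<omega>" using dge[OF j] mge[where \<omega>=\<omega>, OF j] by simp
        finally show ?thesis by simp
      qed
      have sg2: "0 < sig\<^sup>2" using sg by simp
      have "\<bar>kvec k (Xm i) x \<bullet> (reg_inv k (sig\<^sup>2) (Xm i) *\<^sub>v vec (N i) (\<lambda>j. g i j \<omega>))\<bar>
          \<le> real (length (Xm i)) / sig\<^sup>2 * (m i \<omega> + d i)"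
        by (rule post_bound[OF psd kb sg2 vc vb])
      then have Kb2: "\<bar>kvec k (Xm i) x \<bullet> (reg_inv k (sig\<^sup>2) (Xm i) *\<^sub>v vec (N i) (\<lambda>j. g i j \<omega>))\<bar>
          \<le> real (N i) / sig\<^sup>2 * (m i \<omega> + d i)" by (simp only: lenXm)
      have wa: "\<bar>w i\<bar> = w i" using w0[OF i] by simp
      show "\<bar>w i * (kvec k (Xm i) x \<bullet> (reg_inv k (sig\<^sup>2) (Xm i) *\<^sub>v vec (N i) (\<lambda>j. g i j \<omega>)))\<bar>
          \<le> w i * (real (N i) / sig\<^sup>2 * (m i \<omega> + d i))"
        unfolding abs_mult wa using Kb2 w0[OF i] by (rule mult_left_mono)
    qed
    finally show ?thesis .
  qed
  have incl: "\<omega> \<in> T" if om: "\<omega> \<in> space P" and good: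
    "(\<Sum>i<M. w i * real (N i) * Max ((\<lambda>j. \<bar>eps i j \<omega> - epst i j \<omega>\<bar>) ` {..<N i}))
      \<le> (\<Sum>i<M. w i * real (N i) * (2 * sqrt (2 * sig\<^sup>2 * ln (8 * real (N i) / delta))))" for \<omega>
  proof -
    define a where "a i = 2 * sqrt (2 * sig\<^sup>2 * ln (8 * real (N i) / delta))" for i
    have good': "(\<Sum>i<M. w i * real (N i) * m i \<omega>) \<le> (\<Sum>i<M. w i * real (N i) * a i)"
      using good unfolding m_def a_def .
    have split: "(\<Sum>i<M. w i * (real (N i) / sig\<^sup>2 * (z i + d i)))
        = (\<Sum>i<M. w i * real (N i) * z i) / sig\<^sup>2 + (\<Sum>i<M. w i * (real (N i) / sig\<^sup>2) * d i)" for z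
    proof -
      have "(\<Sum>i<M. w i * (real (N i) / sig\<^sup>2 * (z i + d i)))
          = (\<Sum>i<M. w i * real (N i) * z i / sig\<^sup>2 + w i * (real (N i) / sig\<^sup>2) * d i)"
        by (intro sum.cong refl) (simp add: algebra_simps add_divide_distrib)
      also have "\<dots> = (\<Sum>i<M. w i * real (N i) * z i / sig\<^sup>2) + (\<Sum>i<M. w i * (real (N i) / sig\<^sup>2) * d i)"
        by (rule sum.distrib)
      also have "(\<Sum>i<M. w i * real (N i) * z i / sig\<^sup>2) = (\<Sum>i<M. w i * real (N i) * z i) / sig\<^sup>2"
        by (rule sum_divide_distrib[symmetric])
      finally show ?thesis .
    qed
    have alpha_eq: "alpha = (\<Sum>i<M. w i * (real (N i) / sig\<^sup>2 * (a i + d i)))"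
      unfolding alpha_def a_def by (simp add: mult.assoc)
    have Sle: "\<bar>S x \<omega>\<bar> \<le> alpha" for x
    proof -
      have "\<bar>S x \<omega>\<bar> \<le> (\<Sum>i<M. w i * (real (N i) / sig\<^sup>2 * (m i \<omega> + d i)))" by (rule Sbound)
      also have "\<dots> = (\<Sum>i<M. w i * real (N i) * m i \<omega>) / sig\<^sup>2 + (\<Sum>i<M. w i * (real (N i) / sig\<^sup>2) * d i)"
        by (rule split)
      also have "\<dots> \<le> (\<Sum>i<M. w i * real (N i) * a i) / sig\<^sup>2 + (\<Sum>i<M. w i * (real (N i) / sig\<^sup>2) * d i)"
        using good' sg by (simp add: divide_right_mono)
      also have "\<dots> = alpha" unfolding alpha_eq by (rule split[symmetric])
      finally show ?thesis .
    qed
    show ?thesis unfolding T_def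
    proof (intro CollectI conjI allI impI ballI om)
      fix t :: nat and x assume "1 \<le> t" "x \<in> D"
      have "\<bar>acq k sig lam tau (beta t) (nu t) M w Xm (Ybar \<omega>) (Xh t \<omega>) (Yh t \<omega>) x
           - acq k sig lam tau (beta t) (nu t) M w Xm (Ytil \<omega>) (Xh t \<omega>) (Yh t \<omega>) x\<bar> = nu t * \<bar>S x \<omega>\<bar>"
        unfolding acqdiff using nu01[of t] by (simp add: abs_mult)
      also have "\<dots> \<le> nu t * alpha" using Sle[of x] nu01[of t] by (simp add: mult_left_mono)
      finally show "\<bar>acq k sig lam tau (beta t) (nu t) M w Xm (Ybar \<omega>) (Xh t \<omega>) (Yh t \<omega>) x
           - acq k sig lam tau (beta t) (nu t) M w Xm (Ytil \<omega>) (Xh t \<omega>) (Yh t \<omega>) x\<bar> \<le> nu t * alpha" .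
    qed
  qed
  have Smeas: "S x \<in> borel_measurable P" for x
  proof -
    have "(\<lambda>\<omega>. kvec k (Xm i) x \<bullet> (reg_inv k (sig\<^sup>2) (Xm i) *\<^sub>v vec (N i) (\<lambda>j. g i j \<omega>))) \<in> borel_measurable P"
      if i: "i < M" for i
    proof (rule meas_kv)
      fix j assume j: "j < N i"
      have e: "eps i j \<in> borel_measurable P" using distributed_measurable[OF dE[OF i j]] by simp
      have e': "epst i j \<in> borel_measurable P" using distributed_measurable[OF dT[OF i j]] by simp
      show "g i j \<in> borel_measurable P" unfolding g_def[abs_def] using e e' by measurable
    qed
    then show ?thesis unfolding S_def[abs_def]
      by (intro borel_measurable_sum borel_measurable_times borel_measurable_const) auto
  qed
  have Teq: "T = {\<omega> \<in> space P. \<forall>t. 1 \<le> t \<longrightarrow> (\<forall>x\<in>D. \<bar>nu t * S x \<omega>\<bar> \<le> nu t * alpha)}"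
    unfolding T_def acqdiff by simp
  have Tm: "T \<in> sets P"
  proof -
    note Smeas[measurable] finD[measurable]
    show ?thesis unfolding Teq by measurable
  qed
  have "measure P T \<ge> 1 - delta / 4"
    by (rule prob_part[OF ps sg d0 d1 w0 w1 N0 dE dT Tm incl])
  then show ?thesis
    unfolding T_def k_def Xm_def Ybar_def Ytil_def Xh_def Yh_def d_def alpha_def Let_def .
qed

end
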